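(* Let $k$ be an infinite field, let $A$ be a $k$-algebra, let $a_1,\ldots,a_m\in A$ and $d\ge1$. If each element of $ka_1+\cdots+ka_m$ is algebraic over $k$ of degree at most $d$, then $P_{\ge0}(a_1,\ldots,a_m)\subseteq P_{\le d-1}(a_1,\ldots,a_m)$; in particular $\dim_kP_{\ge0}(a_1,\ldots,a_m)<\infty$.
   Context: Algebras are associative with unit. For nonnegative integers $i_1,\ldots,i_m$, $p_{i_1,\ldots,i_m}(x_1,\ldots,x_m)$ is the sum of all distinct noncommutative monomials with exactly $i_j$ occurrences of $x_j$ for each $j$ ($p_{0,\ldots,0}=1$); $p_{i_1,\ldots,i_m}(a_1,\ldots,a_m)$ is its evaluation at $x_j=a_j$. $P_n(a_1,\ldots,a_m)=\operatorname{span}_k\{p_{i_1,\ldots,i_m}(a_1,\ldots,a_m)\mid i_1+\cdots+i_m=n\}$, $P_{\le r}(a_1,\ldots,a_m)=\sum_{n=0}^rP_n(a_1,\ldots,a_m)$, and $P_{\ge r}(a_1,\ldots,a_m)=\sum_{n=r}^\infty P_n(a_1,\ldots,a_m)$. Algebraic of degree at most $d$ means a root of a nonzero polynomial in $k[t]$ of degree at most $d$. *)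

theory Defs
  imports Main "HOL-Computational_Algebra.Polynomial"
begin

definition k_algebra :: "('k::field \<Rightarrow> 'b::ring_1 \<Rightarrow> 'b) \<Rightarrow> bool" where
  "k_algebra scal \<longleftrightarrow> vector_space scal \<and>
     (\<forall>c x y. scal c (x * y) = scal c x * y \<and> scal c (x * y) = x * scal c y)"

definition alg_eval :: "('k::field \<Rightarrow> 'b::ring_1 \<Rightarrow> 'b) \<Rightarrow> 'k poly \<Rightarrow> 'b \<Rightarrow> 'b" where
  "alg_eval scal q x = (\<Sum>i\<le>degree q. scal (coeff q i) (x ^ i))"

definition algebraic_deg_le :: "('k::field \<Rightarrow> 'b::ring_1 \<Rightarrow> 'b) \<Rightarrow> nat \<Rightarrow> 'b \<Rightarrow> bool" where
  "algebraic_deg_le scal d x \<longleftrightarrow> (\<exists>q. q \<noteq> 0 \<and> degree q \<le> d \<and> alg_eval scal q x = 0)"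

text \<open>Noncommutative monomials in variables indexed 0..m-1 are words (lists of indices).
  The words with exactly e j occurrences of variable j (for each j < m):\<close>
definition words :: "nat \<Rightarrow> (nat \<Rightarrow> nat) \<Rightarrow> nat list set" where
  "words m e = {w. set w \<subseteq> {..<m} \<and> (\<forall>j<m. count_list w j = e j)}"

definition pe :: "nat \<Rightarrow> (nat \<Rightarrow> 'b::ring_1) \<Rightarrow> (nat \<Rightarrow> nat) \<Rightarrow> 'b" where
  "pe m a e = (\<Sum>w\<in>words m e. prod_list (map a w))"

definition Pn :: "('k::field \<Rightarrow> 'b::ring_1 \<Rightarrow> 'b) \<Rightarrow> nat \<Rightarrow> (nat \<Rightarrow> 'b) \<Rightarrow> nat \<Rightarrow> 'b set" where
  "Pn scal m a n = module.span scal
     {pe m a e | e. (\<forall>j\<ge>m. e j = 0) \<and> (\<Sum>j<m. e j) = n}"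

definition P_le :: "('k::field \<Rightarrow> 'b::ring_1 \<Rightarrow> 'b) \<Rightarrow> nat \<Rightarrow> (nat \<Rightarrow> 'b) \<Rightarrow> nat \<Rightarrow> 'b set" where
  "P_le scal m a r = module.span scal (\<Union>n\<in>{..r}. Pn scal m a n)"

definition P_ge :: "('k::field \<Rightarrow> 'b::ring_1 \<Rightarrow> 'b) \<Rightarrow> nat \<Rightarrow> (nat \<Rightarrow> 'b) \<Rightarrow> nat \<Rightarrow> 'b set" where
  "P_ge scal m a r = module.span scal (\<Union>n\<in>{r..}. Pn scal m a n)"

end

theory Submission
  imports Defs
begin


definition lagr :: "'a::field set \<Rightarrow> 'a \<Rightarrow> 'a poly" where
  "lagr A a = smult (inverse (\<Prod>b\<in>A-{a}. a - b)) (\<Prod>b\<in>A-{a}. [:-b,1:])"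

lemma poly_lagr: "poly (lagr A a) x = (\<Prod>b\<in>A-{a}. x - b) * inverse (\<Prod>b\<in>A-{a}. a - b)"
  by (simp add: lagr_def poly_prod)

lemma degree_lagr: assumes "finite A" "a \<in> A" shows "degree (lagr A a) \<le> card A - 1"
proof -
  have "degree (\<Prod>b\<in>A-{a}. [:-b,1:]) \<le> (\<Sum>b\<in>A-{a}. degree [:-b,(1::'a):])"
    using degree_prod_sum_le[of "A-{a}" "\<lambda>b. [:-b,1:]"] assms by (simp add: o_def)
  also have "\<dots> = card (A-{a})" by simp
  also have "\<dots> \<le> card A - 1" using assms(2) by (simp add: card_Diff_singleton_if)
  finally show ?thesis unfolding lagr_def using degree_smult_le order_trans by blast
qed

lemma poly_lagr_self: assumes "finite A" shows "poly (lagr A a) a = 1"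
proof -
  have "(\<Prod>b\<in>A-{a}. a - b) \<noteq> 0" using assms by (simp add: prod_zero_iff)
  then show ?thesis by (simp add: poly_lagr)
qed

lemma poly_lagr_other: assumes "finite A" "c \<in> A" "c \<noteq> a" shows "poly (lagr A a) c = 0"
proof -
  have "(\<Prod>b\<in>A-{a}. c - b) = 0" using assms by (subst prod_zero_iff) auto
  then show ?thesis by (simp add: poly_lagr)
qed

lemma interp: fixes p :: "'a::field poly"
  assumes "finite A" "degree p < card A"
  shows "p = (\<Sum>a\<in>A. smult (poly p a) (lagr A a))"
proof (rule poly_eqI_degree[of A])
  fix x assume x: "x \<in> A"
  have "poly (\<Sum>a\<in>A. smult (poly p a) (lagr A a)) x = (\<Sum>a\<in>A. poly p a * poly (lagr A a) x)"
    by (simp add: poly_sum)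
  also have "\<dots> = poly p x * poly (lagr A x) x + (\<Sum>a\<in>A-{x}. poly p a * poly (lagr A a) x)"
    using x assms(1) by (simp add: sum.remove)
  also have "\<dots> = poly p x"
  proof -
    have "\<forall>a\<in>A-{x}. poly p a * poly (lagr A a) x = 0" using poly_lagr_other[OF assms(1) x] by auto
    then show ?thesis using assms(1) x by (simp add: poly_lagr_self sum.neutral)
  qed
  finally show "poly p x = poly (\<Sum>a\<in>A. smult (poly p a) (lagr A a)) x" by simp
next
  show "degree p < card A" by fact
  have "degree (\<Sum>a\<in>A. smult (poly p a) (lagr A a)) \<le> card A - 1"
    using assms(1) by (intro degree_sum_le) (auto intro: order_trans[OF degree_smult_le] degree_lagr[OF assms(1), simplified])
  then show "degree (\<Sum>a\<in>A. smult (poly p a) (lagr A a)) < card A" using assms by linarith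
qed

lemma vdm_scalar: fixes A :: "'a::field set"
  assumes "finite A" "card A = Suc n" "i \<le> n"
  shows "(\<Sum>a\<in>A. a ^ i * coeff (lagr A a) j) = (if i = j then 1 else 0)"
proof -
  have "monom (1::'a) i = (\<Sum>a\<in>A. smult (poly (monom 1 i) a) (lagr A a))"
    using assms by (intro interp) (auto simp: degree_monom_eq)
  then have "coeff (monom (1::'a) i) j = coeff (\<Sum>a\<in>A. smult (a ^ i) (lagr A a)) j"
    by (simp add: poly_monom)
  then show ?thesis by (simp add: coeff_sum coeff_monom)
qed

lemma (in vector_space) vdm:
  assumes "finite A" "card A = Suc n" "subspace V"
    "\<And>s. s \<in> A \<Longrightarrow> (\<Sum>i\<le>n. scale (s ^ i) (v i)) \<in> V" "j \<le> n"
  shows "v j \<in> V"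
proof -
  have "v j = (\<Sum>i\<le>n. scale (if i = j then 1 else 0) (v i))"
  proof -
    have "(\<Sum>i\<le>n. scale (if i = j then 1 else 0) (v i)) = (\<Sum>i\<le>n. if i = j then v i else 0)"
      by (rule sum.cong) auto
    then show ?thesis using assms(5) by simp
  qed
  also have "\<dots> = (\<Sum>i\<le>n. scale (\<Sum>a\<in>A. a ^ i * coeff (lagr A a) j) (v i))"
    using vdm_scalar[OF assms(1,2)] by simp
  also have "\<dots> = (\<Sum>i\<le>n. \<Sum>a\<in>A. scale (coeff (lagr A a) j) (scale (a ^ i) (v i)))"
    by (simp add: scale_sum_left mult.commute)
  also have "\<dots> = (\<Sum>a\<in>A. scale (coeff (lagr A a) j) (\<Sum>i\<le>n. scale (a ^ i) (v i)))"
    by (subst sum.swap) (simp add: scale_sum_right)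
  also have "\<dots> \<in> V" by (rule subspace_sum[OF assms(3)], rule subspace_scale[OF assms(3)], rule assms(4))
  finally show ?thesis .
qed




definition En :: "nat \<Rightarrow> nat \<Rightarrow> (nat \<Rightarrow> nat) set" where
  "En m n = {e. (\<forall>j\<ge>m. e j = 0) \<and> (\<Sum>j<m. e j) = n}"

definition mon :: "nat \<Rightarrow> (nat \<Rightarrow> 'a::comm_ring_1) \<Rightarrow> (nat \<Rightarrow> nat) \<Rightarrow> 'a" where
  "mon m t e = (\<Prod>j<m. t j ^ e j)"

lemma En_le: assumes "e \<in> En m n" shows "e j \<le> n"
proof (cases "j < m")
  case True
  then have "e j \<le> (\<Sum>j<m. e j)" by (intro member_le_sum) auto
  then show ?thesis using assms by (simp add: En_def)
next
  case False then show ?thesis using assms by (simp add: En_def)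
qed

lemma finite_En: "finite (En m n)"
proof (rule finite_subset)
  show "En m n \<subseteq> {f. \<forall>x. (x \<in> {..<m} \<longrightarrow> f x \<in> {..n}) \<and> (x \<notin> {..<m} \<longrightarrow> f x = 0)}"
    using En_le by (auto simp: En_def)
  show "finite {f. \<forall>x. (x \<in> {..<m} \<longrightarrow> f x \<in> {..n}) \<and> (x \<notin> {..<m} \<longrightarrow> f x = (0::nat))}"
    by (rule finite_set_of_finite_funs) auto
qed

lemma mon_split: assumes "k < m"
  shows "mon m (t(k:=s)) e = s ^ e k * mon m (t(k:=1)) e"
proof -
  have "mon m (t(k:=s)) e = s ^ e k * (\<Prod>j\<in>{..<m}-{k}. (t(k:=s)) j ^ e j)"
    unfolding mon_def using assms by (subst prod.remove[of _ k]) auto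
  also have "(\<Prod>j\<in>{..<m}-{k}. (t(k:=s)) j ^ e j) = (\<Prod>j\<in>{..<m}-{k}. (t(k:=1)) j ^ e j)"
    by (rule prod.cong) auto
  also have "s ^ e k * \<dots> = s ^ e k * mon m (t(k:=1)) e"
    unfolding mon_def using assms by (subst (2) prod.remove[of _ k]) auto
  finally show ?thesis .
qed

definition QQ :: "('a::comm_ring_1 \<Rightarrow> 'b::ab_group_add \<Rightarrow> 'b) \<Rightarrow> nat \<Rightarrow> nat \<Rightarrow> ((nat \<Rightarrow> nat) \<Rightarrow> 'b) \<Rightarrow> nat \<Rightarrow> (nat \<Rightarrow> nat) \<Rightarrow> (nat \<Rightarrow> 'a) \<Rightarrow> 'b" where
  "QQ sc m n u k e0 t = (\<Sum>e\<in>{e\<in>En m n. \<forall>j<k. e j = e0 j}. sc (mon m t e) (u e))"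

context vector_space begin

lemma QQ_step: assumes "k < m"
  fixes t :: "nat \<Rightarrow> 'a"
  shows "QQ scale m n u k e1 (t(k:=s)) = (\<Sum>i\<le>n. scale (s ^ i) (QQ scale m n u (Suc k) (e1(k:=i)) (t(k:=1))))"
proof -
  define S where "S = {e\<in>En m n. \<forall>j<k. e j = e1 j}"
  have fS: "finite S" unfolding S_def using finite_En by auto
  have "QQ scale m n u k e1 (t(k:=s)) = (\<Sum>e\<in>S. scale (s ^ e k) (scale (mon m (t(k:=1)) e) (u e)))"
    unfolding QQ_def S_def by (rule sum.cong[OF refl], subst mon_split[OF assms]) simp
  also have "\<dots> = (\<Sum>i\<le>n. \<Sum>e\<in>{e\<in>S. e k = i}. scale (s ^ e k) (scale (mon m (t(k:=1)) e) (u e)))"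
    by (rule sum.group[symmetric]) (use fS En_le in \<open>auto simp: S_def\<close>)
  also have "\<dots> = (\<Sum>i\<le>n. scale (s ^ i) (QQ scale m n u (Suc k) (e1(k:=i)) (t(k:=1))))"
  proof (rule sum.cong[OF refl])
    fix i
    have eq: "{e\<in>S. e k = i} = {e\<in>En m n. \<forall>j<Suc k. e j = (e1(k:=i)) j}"
      unfolding S_def by (auto simp: less_Suc_eq)
    show "(\<Sum>e\<in>{e\<in>S. e k = i}. scale (s ^ e k) (scale (mon m (t(k:=1)) e) (u e)))
        = scale (s ^ i) (QQ scale m n u (Suc k) (e1(k:=i)) (t(k:=1)))"
      unfolding QQ_def eq[symmetric] scale_sum_right by (rule sum.cong) auto
  qed
  finally show ?thesis .
qed

lemma QQ_in: assumes inf: "infinite (UNIV::'a set)" and V: "subspace V"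
  and F: "\<And>t. (\<Sum>e\<in>En m n. scale (mon m t e) (u e)) \<in> V"
  shows "k \<le> m \<Longrightarrow> QQ scale m n u k e0 t \<in> V"
proof (induction k arbitrary: e0 t)
  case 0
  then show ?case using F by (simp add: QQ_def)
next
  case (Suc k)
  then have k: "k < m" by simp
  obtain A :: "'a set" where A: "finite A" "card A = Suc n"
    using infinite_arbitrarily_large[OF inf] by blast
  show ?case
  proof (cases "e0 k \<le> n")
    case True
    have "QQ scale m n u (Suc k) (e0(k:=e0 k)) (t(k:=1)) \<in> V"
    proof (rule vdm[OF A V _ True, where v = "\<lambda>i. QQ scale m n u (Suc k) (e0(k:=i)) (t(k:=1))"])
      fix s show "(\<Sum>i\<le>n. s ^ i *s QQ scale m n u (Suc k) (e0(k := i)) (t(k := 1))) \<in> V"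
      proof -
        have "QQ scale m n u k e0 (t(k:=s)) = (\<Sum>i\<le>n. scale (s ^ i) (QQ scale m n u (Suc k) (e0(k:=i)) (t(k:=1))))"
          by (rule QQ_step[OF k])
        then show ?thesis using Suc.IH[of e0 "t(k:=s)"] Suc.prems by (metis Suc_leD)
      qed
    qed
    then have "scale (t k ^ e0 k) (QQ scale m n u (Suc k) e0 (t(k:=1))) \<in> V"
      by (simp add: subspace_scale[OF V])
    moreover have "scale (t k ^ e0 k) (QQ scale m n u (Suc k) e0 (t(k:=1))) = QQ scale m n u (Suc k) e0 t"
      unfolding QQ_def scale_sum_right
    proof (rule sum.cong[OF refl])
      fix e assume "e \<in> {e\<in>En m n. \<forall>j<Suc k. e j = e0 j}"
      then have "e k = e0 k" by auto
      moreover have "t(k:=t k) = t" by simp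
      ultimately show "t k ^ e0 k *s mon m (t(k := 1)) e *s u e = mon m t e *s u e"
        using mon_split[OF k, of t "t k" e] by simp
    qed
    ultimately show ?thesis by simp
  next
    case False
    then have "{e\<in>En m n. \<forall>j<Suc k. e j = e0 j} = {}" proof -
      have "\<And>e. e \<in> En m n \<Longrightarrow> e k \<noteq> e0 k" using En_le[of _ m n k] False by fastforce
      then show ?thesis by blast
    qed
    then show ?thesis unfolding QQ_def by (metis sum.empty subspace_0[OF V])
  qed
qed

lemma extract_coeff: assumes inf: "infinite (UNIV::'a set)" and V: "subspace V"
  and F: "\<And>t. (\<Sum>e\<in>En m n. scale (mon m t e) (u e)) \<in> V"
  and e: "e \<in> En m n"
  shows "u e \<in> V"
proof -
  have "QQ scale m n u m e (\<lambda>_. 1) \<in> V" by (rule QQ_in[OF inf V F]) simp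
  moreover have "{e'\<in>En m n. \<forall>j<m. e' j = e j} = {e}"
    using e by (auto simp: En_def intro!: ext) (metis not_le)
  ultimately show ?thesis by (simp add: QQ_def mon_def)
qed

end



lemma kalg_vs: "k_algebra scal \<Longrightarrow> vector_space scal" by (simp add: k_algebra_def)

lemma prod_scal:
  assumes "k_algebra scal"
  shows "prod_list (map (\<lambda>j. scal (t j) (a j)) w) = scal (prod_list (map t w)) (prod_list (map a w))"
proof -
  interpret vector_space scal by (rule kalg_vs[OF assms])
  have L: "\<And>c x y. scal c (x * y) = scal c x * y" using assms unfolding k_algebra_def by blast
  have R: "\<And>c x y. scal c (x * y) = x * scal c y" using assms unfolding k_algebra_def by blast
  show ?thesis
  proof (induction w)
    case Nil then show ?case by simp
  next
    case (Cons x w)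
    have "scal (t x) (a x) * scal (prod_list (map t w)) (prod_list (map a w))
        = scal (t x) (a x * scal (prod_list (map t w)) (prod_list (map a w)))" by (simp add: L)
    also have "\<dots> = scal (t x * prod_list (map t w)) (a x * prod_list (map a w))" by (simp add: R[symmetric])
    finally show ?case using Cons by simp
  qed
qed

definition Wd :: "nat \<Rightarrow> nat \<Rightarrow> nat list set" where
  "Wd m n = {w. set w \<subseteq> {..<m} \<and> length w = n}"

lemma finite_Wd: "finite (Wd m n)"
  unfolding Wd_def by (rule finite_lists_length_eq) simp

lemma pow_words: fixes b :: "nat \<Rightarrow> 'b::ring_1"
  shows "(\<Sum>j<m. b j) ^ n = (\<Sum>w\<in>Wd m n. prod_list (map b w))"
proof (induction n)
  case 0
  have "Wd m 0 = {[]}" by (auto simp: Wd_def)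
  then show ?case by simp
next
  case (Suc n)
  have inj: "inj_on (\<lambda>(xs, n). n # xs) (Wd m n \<times> {..<m})" by (auto simp: inj_on_def)
  have "(\<Sum>j<m. b j) ^ Suc n = (\<Sum>j<m. b j) * (\<Sum>w\<in>Wd m n. prod_list (map b w))"
    using Suc by simp
  also have "\<dots> = (\<Sum>w\<in>Wd m n. \<Sum>j<m. b j * prod_list (map b w))"
    by (simp add: sum_distrib_left sum_distrib_right)
  also have "\<dots> = (\<Sum>(w,j)\<in>Wd m n \<times> {..<m}. prod_list (map b (j # w)))"
    by (simp add: sum.cartesian_product)
  also have "\<dots> = (\<Sum>w\<in>(\<lambda>(xs, n). n # xs) ` (Wd m n \<times> {..<m}). prod_list (map b w))"
    by (subst sum.reindex[OF inj]) (simp add: case_prod_unfold)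
  also have "(\<lambda>(xs, n). n # xs) ` (Wd m n \<times> {..<m}) = Wd m (Suc n)"
    unfolding Wd_def by (rule lists_length_Suc_eq[symmetric])
  finally show ?case .
qed

lemma count_sum: fixes w :: "nat list" shows "set w \<subseteq> {..<m} \<Longrightarrow> (\<Sum>j<m. count_list w j) = length w"
proof (induction w)
  case Nil then show ?case by simp
next
  case (Cons x w)
  have "(\<Sum>j<m. count_list (x # w) j) = (\<Sum>j<m. (if j = x then 1 else 0) + count_list w j)"
    by (rule sum.cong) auto
  also have "\<dots> = (\<Sum>j<m. if j = x then 1 else 0) + (\<Sum>j<m. count_list w j)"
    by (rule sum.distrib)
  also have "(\<Sum>j<m. if j = x then 1 else 0::nat) = 1"
    using Cons.prems by (subst sum.delta) auto
  finally show ?case using Cons by simp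
qed

lemma prod_count: fixes t :: "nat \<Rightarrow> 'a::comm_ring_1"
  shows "set w \<subseteq> {..<m} \<Longrightarrow> prod_list (map t w) = mon m t (\<lambda>j. count_list w j)"
proof (induction w)
  case Nil then show ?case by (simp add: mon_def)
next
  case (Cons x w)
  have "mon m t (\<lambda>j. count_list (x # w) j) = (\<Prod>j<m. (if x = j then t j else 1) * t j ^ count_list w j)"
    unfolding mon_def by (rule prod.cong) auto
  also have "\<dots> = t x * mon m t (\<lambda>j. count_list w j)" using Cons.prems
    by (simp add: prod.distrib mon_def)
  finally show ?case using Cons by simp
qed

lemma pow_group:
  assumes "k_algebra scal"
  shows "(\<Sum>j<m. scal (t j) (a j)) ^ n = (\<Sum>e\<in>En m n. scal (mon m t e) (pe m a e))"
proof -
  interpret vector_space scal by (rule kalg_vs[OF assms])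
  have "(\<Sum>j<m. scal (t j) (a j)) ^ n = (\<Sum>w\<in>Wd m n. scal (prod_list (map t w)) (prod_list (map a w)))"
    by (simp add: pow_words prod_scal[OF assms])
  also have "\<dots> = (\<Sum>e\<in>En m n. \<Sum>w\<in>{w\<in>Wd m n. (\<lambda>j. count_list w j) = e}. scal (prod_list (map t w)) (prod_list (map a w)))"
  proof (rule sum.group[symmetric, OF finite_Wd finite_En])
    show "(\<lambda>w j. count_list w j) ` Wd m n \<subseteq> En m n"
    proof
      fix e assume "e \<in> (\<lambda>w j. count_list w j) ` Wd m n"
      then obtain w where w: "w \<in> Wd m n" "e = (\<lambda>j. count_list w j)" by auto
      have "\<forall>j\<ge>m. count_list w j = 0" using w(1) by (auto simp: Wd_def count_list_0_iff)
      then show "e \<in> En m n" using w count_sum[of w m] by (auto simp: Wd_def En_def)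
    qed
  qed
  also have "\<dots> = (\<Sum>e\<in>En m n. scal (mon m t e) (pe m a e))"
  proof (rule sum.cong[OF refl])
    fix e assume e: "e \<in> En m n"
    have eq: "{w\<in>Wd m n. (\<lambda>j. count_list w j) = e} = words m e"
    proof (intro set_eqI iffI)
      fix w assume "w \<in> {w\<in>Wd m n. (\<lambda>j. count_list w j) = e}"
      then show "w \<in> words m e" by (auto simp: Wd_def words_def)
    next
      fix w assume w: "w \<in> words m e"
      then have sw: "set w \<subseteq> {..<m}" by (simp add: words_def)
      have "(\<lambda>j. count_list w j) = e"
      proof
        fix j show "count_list w j = e j"
        proof (cases "j < m")
          case True then show ?thesis using w by (simp add: words_def)
        next
          case False
          then have "j \<notin> set w" using sw by auto
          then show ?thesis using e False by (simp add: En_def count_list_0_iff)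
        qed
      qed
      moreover have "length w = n" using count_sum[OF sw] e w by (simp add: En_def words_def)
      ultimately show "w \<in> {w\<in>Wd m n. (\<lambda>j. count_list w j) = e}" using sw by (simp add: Wd_def)
    qed
    show "(\<Sum>w\<in>{w\<in>Wd m n. (\<lambda>j. count_list w j) = e}. scal (prod_list (map t w)) (prod_list (map a w)))
        = scal (mon m t e) (pe m a e)"
      unfolding eq pe_def scale_sum_right
    proof (rule sum.cong[OF refl])
      fix w assume "w \<in> words m e"
      then have sw: "set w \<subseteq> {..<m}" and c: "\<forall>j<m. count_list w j = e j" by (auto simp: words_def)
      have "prod_list (map t w) = mon m t e"
        unfolding prod_count[OF sw] mon_def using c by (intro prod.cong) auto
      then show "scal (prod_list (map t w)) (prod_list (map a w)) = scal (mon m t e) (prod_list (map a w))" by simp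
    qed
  qed
  finally show ?thesis .
qed




theorem corollary3p3:
  fixes scal :: "'k::field \<Rightarrow> 'b::ring_1 \<Rightarrow> 'b"
    and m d :: nat and a :: "nat \<Rightarrow> 'b"
  assumes "infinite (UNIV :: 'k set)"
    and "k_algebra scal"
    and "d \<ge> 1"
    and "\<forall>x \<in> module.span scal (a ` {..<m}). algebraic_deg_le scal d x"
  shows "P_ge scal m a 0 \<subseteq> P_le scal m a (d - 1) \<and>
         (\<exists>B. finite B \<and> module.span scal B = P_ge scal m a 0)"
proof -
  interpret vector_space scal by (rule kalg_vs[OF assms(2)])
  have L: "\<And>c x y. scal c (x * y) = scal c x * y" using assms(2) unfolding k_algebra_def by blast
  have R: "\<And>c x y. scal c (x * y) = x * scal c y" using assms(2) unfolding k_algebra_def by blast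
  define V where "V = P_le scal m a (d - 1)"
  have sV: "subspace V" unfolding V_def P_le_def by simp
  have gen: "\<And>n. {pe m a e | e. (\<forall>j\<ge>m. e j = 0) \<and> (\<Sum>j<m. e j) = n} = pe m a ` En m n"
    by (auto simp: En_def)
  have Pn_eq: "\<And>n. Pn scal m a n = span (pe m a ` En m n)" unfolding Pn_def gen ..
  have PnV: "\<And>n. n \<le> d - 1 \<Longrightarrow> Pn scal m a n \<subseteq> V"
    unfolding V_def P_le_def by (rule order_trans[OF _ span_superset]) auto
  define x where "x t = (\<Sum>j<m. scal (t j) (a j))" for t
  have xpow: "x t ^ n = (\<Sum>e\<in>En m n. scal (mon m t e) (pe m a e))" for t n
    unfolding x_def by (rule pow_group[OF assms(2)])
  have xPn: "x t ^ n \<in> Pn scal m a n" for t n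
    unfolding xpow Pn_eq by (intro span_sum span_scale span_base) auto
  have xV: "x t ^ n \<in> V" for t n
  proof -
    have "x t \<in> span (a ` {..<m})" unfolding x_def by (intro span_sum span_scale span_base) auto
    then obtain q where q: "q \<noteq> 0" "degree q \<le> d" "alg_eval scal q (x t) = 0"
      using assms(4) unfolding algebraic_deg_le_def by blast
    define D where "D = degree q"
    define c where "c = coeff q D"
    have c0: "c \<noteq> 0" using q(1) unfolding c_def D_def by simp
    let ?y = "x t"
    have "0 = (\<Sum>i<Suc D. scal (coeff q i) (?y ^ i))"
      using q(3) unfolding alg_eval_def D_def lessThan_Suc_atMost by simp
    also have "\<dots> = (\<Sum>i<D. scal (coeff q i) (?y ^ i)) + scal c (?y ^ D)"
      by (simp add: c_def)
    finally have "scal c (?y ^ D) = - (\<Sum>i<D. scal (coeff q i) (?y ^ i))"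
      by (simp add: eq_neg_iff_add_eq_0 add.commute)
    then have yD: "?y ^ D = scal (inverse c) (- (\<Sum>i<D. scal (coeff q i) (?y ^ i)))"
      using c0 by (metis scale_scale scale_one left_inverse)
    show ?thesis
    proof (induction n rule: less_induct)
      case (less n)
      show ?case
      proof (cases "n < d")
        case True
        then have "n \<le> d - 1" by simp
        then show ?thesis using PnV xPn by blast
      next
        case False
        then have nD: "D \<le> n" using q(2) D_def by simp
        have "?y ^ n = ?y ^ (n - D) * ?y ^ D"
          using nD by (simp add: power_add[symmetric])
        also have "\<dots> = scal (inverse c) (- (\<Sum>i<D. scal (coeff q i) (?y ^ (n - D + i))))"
          unfolding yD by (simp add: R[symmetric] sum_distrib_left power_add)
        also have "\<dots> \<in> V"
        proof (rule subspace_scale[OF sV], rule subspace_neg[OF sV], rule subspace_sum[OF sV])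
          fix i assume "i \<in> {..<D}"
          then have "n - D + i < n" using nD by auto
          then show "scal (coeff q i) (?y ^ (n - D + i)) \<in> V"
            using less.IH subspace_scale[OF sV] by blast
        qed
        finally show ?thesis .
      qed
    qed
  qed
  have peV: "pe m a e \<in> V" if "e \<in> En m n" for e n
    by (rule extract_coeff[OF assms(1) sV _ that]) (simp only: xpow[symmetric] xV)
  have PnV2: "Pn scal m a n \<subseteq> V" for n
    unfolding Pn_eq using peV by (intro span_minimal sV) auto
  have sub: "P_ge scal m a 0 \<subseteq> V"
    unfolding P_ge_def using PnV2 by (intro span_minimal sV) auto
  have sub2: "V \<subseteq> P_ge scal m a 0"
    unfolding V_def P_le_def P_ge_def by (rule span_mono) auto
  define B where "B = pe m a ` (\<Union>n\<le>d-1. En m n)"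
  have fB: "finite B" unfolding B_def using finite_En by auto
  have "span B = V"
    unfolding V_def P_le_def
  proof (rule span_eq[THEN iffD2], rule conjI)
    show "B \<subseteq> span (\<Union>n\<in>{..d - 1}. Pn scal m a n)"
    proof -
      have "B \<subseteq> (\<Union>n\<in>{..d - 1}. span (pe m a ` En m n))" unfolding B_def by (auto intro: span_base)
      then show ?thesis unfolding Pn_eq using span_superset by blast
    qed
    show "(\<Union>n\<in>{..d - 1}. Pn scal m a n) \<subseteq> span B"
    proof -
      have "span (pe m a ` En m n) \<subseteq> span B" if "n \<le> d - 1" for n
        unfolding B_def using that by (intro span_mono) auto
      then show ?thesis unfolding Pn_eq by auto
    qed
  qed
  then show ?thesis using sub sub2 fB unfolding V_def by blast
qed


end
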